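(* Let $f:\mathbb{N}^k\to\mathbb{N}$ be a function in the class $\mathcal{G}$. Then for all but finitely many positive integers $s$ there exists a $\lambda$-term $E$ such that (1) for all $n_1,\dots,n_k\in\mathbb{N}$, $E\,\rho(n_1)\cdots\rho(n_k)=_{\beta\eta}\rho(f(n_1,\dots,n_k))$, and (2) $\vdash E:\omega_{\tau(s)}\to\cdots\to\omega_{\tau(s)}\to\omega_{\tau(s)}$ (with $k$ arguments), where $\tau(s)=(\alpha^{s}\to\alpha)\to\alpha$ with $\alpha=\omega_o$, i.e. $\tau(s)$ is the type of an $s$-tuple of numerals.
   Context: We work in the simply typed $\lambda$-calculus (type assignment to untyped $\lambda$-terms) with a single base type $o$. For a type $\tau$, $\omega_\tau=(\tau\to\tau)\to\tau\to\tau$, and $\beta_1^{s}\to\gamma$ abbreviates $\beta_1\to\cdots\to\beta_1\to\gamma$ with $s$ copies of $\beta_1$. The Church numeral of $n$ is $\rho(n)=\lambda f x.f^{n}x$ (so $\rho(0)=\lambda fx.x$, $\rho(1)=\lambda fx.fx$, etc.); it can be assigned type $\omega_\tau$ for every $\tau$. Equality $=_{\beta\eta}$ is $\beta\eta$-conversion. Extended polynomials: the smallest class of functions over $\mathbb{N}$ containing the constants $0$ and $1$, projections, addition, multiplication and $\mathrm{ifzero}(n,m,p)=(\text{if } n=0 \text{ then } m \text{ else } p)$, closed under composition. $\mathcal{G}$ is the smallest class of functions over $\mathbb{N}$ that is closed under composition and contains: all extended polynomials; for every $l\geq 2$ the function $f_1^{l}(m,n_1,\dots,n_l)=n_i$ where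 $i=(m\bmod l)+1$; and for every $l\geq 1$ the function $f_2^{l}(m,n_1,n_2)=(\text{if } m\leq l \text{ then } n_1 \text{ else } n_2)$. *)

theory Defs
  imports Main
begin

datatype dB = Var nat | App dB dB | Abs dB

primrec lift :: "dB \<Rightarrow> nat \<Rightarrow> dB" where
  "lift (Var i) k = (if i < k then Var i else Var (Suc i))"
| "lift (App s t) k = App (lift s k) (lift t k)"
| "lift (Abs s) k = Abs (lift s (Suc k))"

primrec subst :: "dB \<Rightarrow> dB \<Rightarrow> nat \<Rightarrow> dB" where
  "subst (Var i) t k = (if k < i then Var (i - 1) else if i = k then t else Var i)"
| "subst (App s u) t k = App (subst s t k) (subst u t k)"
| "subst (Abs s) t k = Abs (subst s (lift t 0) (Suc k))"

primrec free :: "dB \<Rightarrow> nat \<Rightarrow> bool" where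
  "free (Var j) i = (j = i)"
| "free (App s t) i = (free s i \<or> free t i)"
| "free (Abs s) i = free s (Suc i)"

inductive beta :: "dB \<Rightarrow> dB \<Rightarrow> bool" where
  beta_red: "beta (App (Abs s) t) (subst s t 0)"
| beta_appL: "beta s t \<Longrightarrow> beta (App s u) (App t u)"
| beta_appR: "beta s t \<Longrightarrow> beta (App u s) (App u t)"
| beta_abs: "beta s t \<Longrightarrow> beta (Abs s) (Abs t)"

inductive eta :: "dB \<Rightarrow> dB \<Rightarrow> bool" where
  eta_red: "\<not> free s 0 \<Longrightarrow> eta (Abs (App s (Var 0))) (subst s (Var 0) 0)"
| eta_appL: "eta s t \<Longrightarrow> eta (App s u) (App t u)"
| eta_appR: "eta s t \<Longrightarrow> eta (App u s) (App u t)"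
| eta_abs: "eta s t \<Longrightarrow> eta (Abs s) (Abs t)"

definition beta_eta_conv :: "dB \<Rightarrow> dB \<Rightarrow> bool" where
  "beta_eta_conv = (\<lambda>s t. beta s t \<or> eta s t \<or> beta t s \<or> eta t s)\<^sup>*\<^sup>*"

definition apps :: "dB \<Rightarrow> dB list \<Rightarrow> dB" where
  "apps E ts = foldl App E ts"

text \<open>Church numeral  rho n = \<lambda>f x. f^n x  (f = Var 1, x = Var 0).\<close>
definition church :: "nat \<Rightarrow> dB" where
  "church n = Abs (Abs ((App (Var 1) ^^ n) (Var 0)))"

datatype ty = Base | Fun ty ty

inductive typing :: "ty list \<Rightarrow> dB \<Rightarrow> ty \<Rightarrow> bool" where
  typ_var: "i < length \<Gamma> \<Longrightarrow> \<Gamma> ! i = T \<Longrightarrow> typing \<Gamma> (Var i) T"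
| typ_abs: "typing (T # \<Gamma>) t U \<Longrightarrow> typing \<Gamma> (Abs t) (Fun T U)"
| typ_app: "typing \<Gamma> s (Fun T U) \<Longrightarrow> typing \<Gamma> t T \<Longrightarrow> typing \<Gamma> (App s t) U"

definition omega :: "ty \<Rightarrow> ty" where
  "omega \<tau> = Fun (Fun \<tau> \<tau>) (Fun \<tau> \<tau>)"

definition arrows :: "nat \<Rightarrow> ty \<Rightarrow> ty \<Rightarrow> ty" where
  "arrows s b g = (Fun b ^^ s) g"

definition alpha :: ty where
  "alpha = omega Base"

definition tuple_ty :: "nat \<Rightarrow> ty" where
  "tuple_ty s = Fun (arrows s alpha alpha) alpha"

text \<open>A k-ary function N^k \<rightarrow> N is represented as a function on lists; only its
values on lists of length k matter.  ExtPoly k f / G k f: f is generated as a k-ary function.\<close>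

inductive ExtPoly :: "nat \<Rightarrow> (nat list \<Rightarrow> nat) \<Rightarrow> bool" where
  ep_zero: "ExtPoly k (\<lambda>xs. 0)"
| ep_one: "ExtPoly k (\<lambda>xs. 1)"
| ep_proj: "i < k \<Longrightarrow> ExtPoly k (\<lambda>xs. xs ! i)"
| ep_add: "ExtPoly 2 (\<lambda>xs. xs ! 0 + xs ! 1)"
| ep_mult: "ExtPoly 2 (\<lambda>xs. xs ! 0 * xs ! 1)"
| ep_ifzero: "ExtPoly 3 (\<lambda>xs. if xs ! 0 = 0 then xs ! 1 else xs ! 2)"
| ep_comp: "ExtPoly m h \<Longrightarrow> (\<forall>j<m. ExtPoly k (gs j))
             \<Longrightarrow> ExtPoly k (\<lambda>xs. h (map (\<lambda>j. gs j xs) [0..<m]))"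

inductive G :: "nat \<Rightarrow> (nat list \<Rightarrow> nat) \<Rightarrow> bool" where
  g_extpoly: "ExtPoly k f \<Longrightarrow> G k f"
| g_f1: "l \<ge> 2 \<Longrightarrow> G (Suc l) (\<lambda>xs. xs ! Suc (xs ! 0 mod l))"
| g_f2: "l \<ge> 1 \<Longrightarrow> G 3 (\<lambda>xs. if xs ! 0 \<le> l then xs ! 1 else xs ! 2)"
| g_comp: "G m h \<Longrightarrow> (\<forall>j<m. G k (gs j))
             \<Longrightarrow> G k (\<lambda>xs. h (map (\<lambda>j. gs j xs) [0..<m]))"

definition in_G :: "nat \<Rightarrow> (nat list \<Rightarrow> nat) \<Rightarrow> bool" where
  "in_G k f = (\<exists>g. G k g \<and> (\<forall>xs. length xs = k \<longrightarrow> f xs = g xs))"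

end

theory Submission
  imports Defs
begin

primrec lc :: "nat \<Rightarrow> dB \<Rightarrow> bool" where
  "lc k (Var i) = (i < k)"
| "lc k (App s t) = (lc k s \<and> lc k t)"
| "lc k (Abs t) = lc (Suc k) t"

lemma lc_mono: "lc k t \<Longrightarrow> k \<le> j \<Longrightarrow> lc j t"
  by (induction t arbitrary: k j) auto

lemma lift_lc: "lc k t \<Longrightarrow> k \<le> j \<Longrightarrow> lift t j = t"
  by (induction t arbitrary: k j) auto

lemma subst_lc: "lc k t \<Longrightarrow> k \<le> j \<Longrightarrow> subst t u j = t"
  by (induction t arbitrary: k j u) auto

lemma lift_closed[simp]: "lc 0 t \<Longrightarrow> lift t j = t"
  using lift_lc by blast

lemma subst_closed[simp]: "lc 0 t \<Longrightarrow> subst t u j = t"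
  using subst_lc by blast

lemma lc_funpow[simp]: "lc k ((App F ^^ n) t) = ((n = 0 \<or> lc k F) \<and> lc k t)"
  by (induction n) auto

lemma lc_church[simp]: "lc 0 (church n)"
  by (simp add: church_def)

lemma lift_funpow[simp]: "lift ((App F ^^ n) t) k = (App (lift F k) ^^ n) (lift t k)"
  by (induction n) auto

lemma subst_funpow[simp]: "subst ((App F ^^ n) t) u k = (App (subst F u k) ^^ n) (subst t u k)"
  by (induction n) auto

lemma free_funpow[simp]: "free ((App F ^^ n) t) i = ((0 < n \<and> free F i) \<or> free t i)"
  by (induction n) auto

lemma subst_lift[simp]: "subst (lift t k) u k = t"
  by (induction t arbitrary: k u) auto

lemma free_lift[simp]: "\<not> free (lift t k) k"
  by (induction t arbitrary: k) auto

lemma typing_lc: "typing \<Gamma> t T \<Longrightarrow> lc (length \<Gamma>) t"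
  by (induction rule: typing.induct) auto

lemma typing_closed: "typing [] t T \<Longrightarrow> lc 0 t"
  using typing_lc by fastforce

lemma apps_Nil[simp]: "apps h [] = h" by (simp add: apps_def)
lemma apps_Cons[simp]: "apps h (a # as) = apps (App h a) as" by (simp add: apps_def)

lemma lift_apps[simp]: "lift (apps h as) k = apps (lift h k) (map (\<lambda>a. lift a k) as)"
  by (induction as arbitrary: h) auto
lemma subst_apps[simp]: "subst (apps h as) u k = apps (subst h u k) (map (\<lambda>a. subst a u k) as)"
  by (induction as arbitrary: h) auto
lemma lc_apps[simp]: "lc k (apps h as) = (lc k h \<and> (\<forall>a\<in>set as. lc k a))"
  by (induction as arbitrary: h) auto

abbreviation bs :: "dB \<Rightarrow> dB \<Rightarrow> bool" where "bs \<equiv> beta\<^sup>*\<^sup>*"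
abbreviation conv :: "dB \<Rightarrow> dB \<Rightarrow> bool" where "conv \<equiv> beta_eta_conv"

lemma rtranclp_cong:
  assumes "\<And>x y. R x y \<Longrightarrow> S (f x) (f y)" and "R\<^sup>*\<^sup>* x y"
  shows "S\<^sup>*\<^sup>* (f x) (f y)"
  using assms(2) by (induction rule: rtranclp_induct) (auto intro: rtranclp.rtrancl_into_rtrancl assms(1))

lemma bs_AppL: "bs s t \<Longrightarrow> bs (App s u) (App t u)"
  by (rule rtranclp_cong[where f="\<lambda>x. App x u"]) (auto intro: beta.intros)
lemma bs_AppR: "bs s t \<Longrightarrow> bs (App u s) (App u t)"
  by (rule rtranclp_cong[where f="\<lambda>x. App u x"]) (auto intro: beta.intros)
lemma bs_Abs: "bs s t \<Longrightarrow> bs (Abs s) (Abs t)"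
  by (rule rtranclp_cong[where f="\<lambda>x. Abs x"]) (auto intro: beta.intros)
lemma bs_apps: "bs s t \<Longrightarrow> bs (apps s as) (apps t as)"
  by (induction as arbitrary: s t) (auto intro: bs_AppL)
lemma bs_App: "bs s t \<Longrightarrow> bs u v \<Longrightarrow> bs (App s u) (App t v)"
  by (meson bs_AppL bs_AppR rtranclp_trans)
lemma bs_step: "beta s t \<Longrightarrow> bs s t" by auto
lemma bs_red: "bs (App (Abs s) t) (subst s t 0)" by (auto intro: beta.intros)

definition R :: "dB \<Rightarrow> dB \<Rightarrow> bool" where
  "R = (\<lambda>s t. beta s t \<or> eta s t \<or> beta t s \<or> eta t s)"

lemma conv_R: "conv = R\<^sup>*\<^sup>*" by (simp add: beta_eta_conv_def R_def)

lemma conv_refl[simp]: "conv s s" by (simp add: conv_R)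
lemma conv_trans[trans]: "conv s t \<Longrightarrow> conv t u \<Longrightarrow> conv s u"
  by (simp add: conv_R)
lemma conv_sym: "conv s t \<Longrightarrow> conv t s"
  unfolding conv_R
proof (induction rule: rtranclp_induct)
  case base then show ?case by simp
next
  case (step y z)
  have "R z y" using step(2) by (auto simp: R_def)
  then show ?case using step(3) by (rule converse_rtranclp_into_rtranclp)
qed
lemma bs_conv: "bs s t \<Longrightarrow> conv s t"
  unfolding conv_R by (rule rtranclp_cong[where f=id, simplified]) (auto simp: R_def)
lemma eta_conv: "eta s t \<Longrightarrow> conv s t"
  unfolding conv_R by (auto simp: R_def)
lemma conv_AppL: "conv s t \<Longrightarrow> conv (App s u) (App t u)"
  unfolding conv_R by (rule rtranclp_cong[where f="\<lambda>x. App x u"]) (auto simp: R_def intro: beta.intros eta.intros)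
lemma conv_AppR: "conv s t \<Longrightarrow> conv (App u s) (App u t)"
  unfolding conv_R by (rule rtranclp_cong[where f="\<lambda>x. App u x"]) (auto simp: R_def intro: beta.intros eta.intros)
lemma conv_Abs: "conv s t \<Longrightarrow> conv (Abs s) (Abs t)"
  unfolding conv_R by (rule rtranclp_cong[where f="\<lambda>x. Abs x"]) (auto simp: R_def intro: beta.intros eta.intros)
lemma conv_App: "conv s t \<Longrightarrow> conv u v \<Longrightarrow> conv (App s u) (App t v)"
  by (meson conv_AppL conv_AppR conv_trans)
lemma conv_apps_head: "conv s t \<Longrightarrow> conv (apps s as) (apps t as)"
  by (induction as arbitrary: s t) (auto intro: conv_AppL)
lemma conv_apps_args:
  "length as = length bs' \<Longrightarrow> (\<forall>i<length as. conv (as ! i) (bs' ! i)) \<Longrightarrow> conv (apps h as) (apps h bs')"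
proof (induction as arbitrary: h bs')
  case Nil then show ?case by simp
next
  case (Cons a as)
  then obtain b bs'' where b: "bs' = b # bs''" by (cases bs') auto
  have "conv a b" using Cons.prems(2)[rule_format, of 0] b by simp
  then have "conv (App h a) (App h b)" by (rule conv_AppR)
  then have "conv (apps (App h a) as) (apps (App h b) as)" by (rule conv_apps_head)
  also have "conv (apps (App h b) as) (apps (App h b) bs'')"
    using Cons.prems b by (intro Cons.IH) force+
  finally show ?case using b by simp
qed

fun sub_all :: "dB \<Rightarrow> dB list \<Rightarrow> dB" where
  "sub_all b [] = b"
| "sub_all b (a # as) = sub_all (subst b a (length as)) as"

lemma subst_Abs_pow: "lc 0 a \<Longrightarrow> subst ((Abs ^^ n) b) a k = (Abs ^^ n) (subst b a (k + n))"
  by (induction n arbitrary: k) auto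

lemma multi_beta: "\<forall>a\<in>set as. lc 0 a \<Longrightarrow> bs (apps ((Abs ^^ length as) b) as) (sub_all b as)"
proof (induction as arbitrary: b)
  case Nil then show ?case by simp
next
  case (Cons a as)
  have "bs (App (Abs ((Abs ^^ length as) b)) a) (subst ((Abs ^^ length as) b) a 0)"
    by (rule bs_red)
  also have "subst ((Abs ^^ length as) b) a 0 = (Abs ^^ length as) (subst b a (length as))"
    using Cons.prems by (simp add: subst_Abs_pow)
  finally have "bs (apps (App (Abs ((Abs ^^ length as) b)) a) as)
       (apps ((Abs ^^ length as) (subst b a (length as))) as)" by (rule bs_apps)
  also have "bs \<dots> (sub_all (subst b a (length as)) as)"
    using Cons by simp
  finally show ?case by simp
qed

lemma sub_all_App[simp]: "sub_all (App x y) cs = App (sub_all x cs) (sub_all y cs)"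
  by (induction cs arbitrary: x y) auto
lemma sub_all_apps[simp]: "sub_all (apps h xs) cs = apps (sub_all h cs) (map (\<lambda>x. sub_all x cs) xs)"
  by (induction xs arbitrary: h) auto
lemma sub_all_closed[simp]: "lc 0 t \<Longrightarrow> sub_all t cs = t"
  by (induction cs) auto
lemma sub_all_Var:
  "\<forall>c\<in>set cs. lc 0 c \<Longrightarrow>
   sub_all (Var i) cs = (if i < length cs then cs ! (length cs - Suc i) else Var (i - length cs))"
proof (induction cs arbitrary: i)
  case Nil then show ?case by simp
next
  case (Cons a as)
  show ?case
  proof (cases "i = length as")
    case True then show ?thesis using Cons by simp
  next
    case False
    show ?thesis
    proof (cases "i < length as")
      case True
      then have "length as - i = Suc (length as - Suc i)" by simp
      then show ?thesis using True False Cons by simp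
    next
      case False2: False
      then have "\<not> i - 1 < length as" "i \<noteq> length as" using False by auto
      then show ?thesis using False Cons.IH[of "i-1"] Cons.prems by auto
    qed
  qed
qed

lemma sub_all_Var_church:
  "i < length ns \<Longrightarrow> sub_all (Var (length ns - Suc i)) (map church ns) = church (ns ! i)"
  by (subst sub_all_Var) (auto simp: rev_nth)

lemma arrows_0[simp]: "arrows 0 B C = C" by (simp add: arrows_def)
lemma arrows_Suc[simp]: "arrows (Suc n) B C = Fun B (arrows n B C)" by (simp add: arrows_def)

lemma typing_weaken: "typing \<Gamma> t T \<Longrightarrow> typing (\<Gamma> @ \<Delta>) t T"
  by (induction rule: typing.induct) (auto intro: typing.intros simp: nth_append)

lemma typing_closed_any: "typing [] t T \<Longrightarrow> typing \<Gamma> t T"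
  using typing_weaken[of "[]" t T \<Gamma>] by simp

lemma typing_Abs_pow: "typing (replicate n B @ \<Gamma>) b C \<Longrightarrow> typing \<Gamma> ((Abs ^^ n) b) (arrows n B C)"
proof (induction n arbitrary: \<Gamma>)
  case 0 then show ?case by simp
next
  case (Suc n)
  have "typing (B # \<Gamma>) ((Abs ^^ n) b) (arrows n B C)"
    using Suc by (simp add: replicate_app_Cons_same)
  then show ?case by (auto intro: typing.intros)
qed

lemma typing_apps:
  "typing \<Gamma> h (arrows (length as) B C) \<Longrightarrow> \<forall>a\<in>set as. typing \<Gamma> a B \<Longrightarrow> typing \<Gamma> (apps h as) C"
  by (induction as arbitrary: h) (auto intro: typing.intros)

lemma typing_Var: "i < length \<Gamma> \<Longrightarrow> \<Gamma> ! i = T \<Longrightarrow> typing \<Gamma> (Var i) T"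
  by (rule typ_var)

lemma typing_church: "typing \<Gamma> (church n) (omega \<tau>)"
proof -
  have "typing (\<tau> # Fun \<tau> \<tau> # \<Gamma>) ((App (Var 1) ^^ n) (Var 0)) \<tau>"
  proof (induction n)
    case 0 then show ?case by (auto intro: typ_var)
  next
    case (Suc n) then show ?case by (auto intro!: typ_app[where T=\<tau>] typ_var)
  qed
  then show ?thesis by (auto simp: church_def omega_def intro!: typing.intros)
qed

lemma church_app: "bs (App (App (church n) u) v) ((App u ^^ n) v)"
proof -
  have "bs (App (church n) u) (Abs ((App (lift u 0) ^^ n) (Var 0)))"
    unfolding church_def using bs_red[of "Abs ((App (Var 1) ^^ n) (Var 0))" u] by simp
  then have "bs (App (App (church n) u) v) (App (Abs ((App (lift u 0) ^^ n) (Var 0))) v)"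
    by (rule bs_AppL)
  also have "bs \<dots> ((App u ^^ n) v)" using bs_red[of "(App (lift u 0) ^^ n) (Var 0)" v] by simp
  finally show ?thesis .
qed

lemma iter_beta: "bs ((App (Abs ((App (lift F 0) ^^ b) (Var 0))) ^^ a) t) ((App F ^^ (a * b)) t)"
proof (induction a)
  case 0 then show ?case by simp
next
  case (Suc a)
  have "bs ((App (Abs ((App (lift F 0) ^^ b) (Var 0))) ^^ Suc a) t)
          (App (Abs ((App (lift F 0) ^^ b) (Var 0))) ((App F ^^ (a * b)) t))"
    using Suc by (simp add: bs_AppR)
  also have "bs \<dots> ((App F ^^ b) ((App F ^^ (a * b)) t))"
    using bs_red[of "(App (lift F 0) ^^ b) (Var 0)"] by simp
  also have "(App F ^^ b) ((App F ^^ (a * b)) t) = (App F ^^ (Suc a * b)) t"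
    by (simp only: mult_Suc funpow_add comp_def)
  finally show ?case .
qed

definition rep :: "ty \<Rightarrow> nat \<Rightarrow> (nat list \<Rightarrow> nat) \<Rightarrow> bool" where
  "rep W k f \<longleftrightarrow> (\<exists>E. typing [] E (arrows k W W) \<and>
     (\<forall>ns. length ns = k \<longrightarrow> conv (apps E (map church ns)) (church (f ns))))"

lemma rep_ext: "rep W k f \<Longrightarrow> (\<forall>xs. length xs = k \<longrightarrow> f xs = g xs) \<Longrightarrow> rep W k g"
  unfolding rep_def by (metis (no_types, lifting))

lemma closed_churches: "\<forall>a\<in>set (map church ns). lc 0 a" by simp

lemma rep_proj: "i < k \<Longrightarrow> rep W k (\<lambda>xs. xs ! i)"
  unfolding rep_def
proof (intro exI conjI allI impI)
  assume "i < k"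
  show "typing [] ((Abs ^^ k) (Var (k - Suc i))) (arrows k W W)"
    using \<open>i < k\<close> by (intro typing_Abs_pow) (auto intro!: typ_var)
  fix ns :: "nat list" assume len: "length ns = k"
  have "bs (apps ((Abs ^^ length (map church ns)) (Var (k - Suc i))) (map church ns))
           (sub_all (Var (k - Suc i)) (map church ns))"
    by (rule multi_beta) simp
  then show "conv (apps ((Abs ^^ k) (Var (k - Suc i))) (map church ns)) (church (ns ! i))"
    using len \<open>i < k\<close> sub_all_Var_church[of i ns] by (auto intro: bs_conv)
qed

lemma rep_const: "rep (omega \<tau>) k (\<lambda>xs. c)"
  unfolding rep_def
proof (intro exI conjI allI impI)
  show "typing [] ((Abs ^^ k) (church c)) (arrows k (omega \<tau>) (omega \<tau>))"
    by (intro typing_Abs_pow typing_church)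
  fix ns :: "nat list" assume len: "length ns = k"
  have "bs (apps ((Abs ^^ length (map church ns)) (church c)) (map church ns))
           (sub_all (church c) (map church ns))"
    by (rule multi_beta) simp
  then show "conv (apps ((Abs ^^ k) (church c)) (map church ns)) (church c)"
    using len by (auto intro: bs_conv)
qed

lemma rep_comp:
  assumes h: "rep W m h" and gs: "\<forall>j<m. rep W k (gs j)"
  shows "rep W k (\<lambda>xs. h (map (\<lambda>j. gs j xs) [0..<m]))"
proof -
  obtain H where H: "typing [] H (arrows m W W)"
    "\<And>ns. length ns = m \<Longrightarrow> conv (apps H (map church ns)) (church (h ns))"
    using h unfolding rep_def by blast
  have "\<forall>j. \<exists>E. j < m \<longrightarrow> typing [] E (arrows k W W) \<and>
     (\<forall>ns. length ns = k \<longrightarrow> conv (apps E (map church ns)) (church (gs j ns)))"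
    using gs unfolding rep_def by blast
  from choice[OF this] obtain Gs where Gs0: "\<forall>j. j < m \<longrightarrow> typing [] (Gs j) (arrows k W W) \<and>
     (\<forall>ns. length ns = k \<longrightarrow> conv (apps (Gs j) (map church ns)) (church (gs j ns)))" by blast
  have Gs: "\<And>j. j < m \<Longrightarrow> typing [] (Gs j) (arrows k W W)"
    "\<And>j ns. j < m \<Longrightarrow> length ns = k \<Longrightarrow> conv (apps (Gs j) (map church ns)) (church (gs j ns))"
    using Gs0 by blast+
  define vars where "vars = map (\<lambda>i. Var (k - Suc i)) [0..<k]"
  define body where "body = apps H (map (\<lambda>j. apps (Gs j) vars) [0..<m])"
  show ?thesis unfolding rep_def
  proof (intro exI conjI allI impI)
    have tv: "\<forall>a\<in>set vars. typing (replicate k W) a W"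
      by (auto simp: vars_def intro!: typ_var)
    have tG: "\<forall>a\<in>set (map (\<lambda>j. apps (Gs j) vars) [0..<m]). typing (replicate k W) a W"
    proof
      fix a assume "a \<in> set (map (\<lambda>j. apps (Gs j) vars) [0..<m])"
      then obtain j where j: "j < m" "a = apps (Gs j) vars" by auto
      have "typing (replicate k W) (Gs j) (arrows (length vars) W W)"
        using typing_closed_any[OF Gs(1)[OF j(1)]] by (simp add: vars_def)
      then show "typing (replicate k W) a W" using j tv by (auto intro: typing_apps)
    qed
    have "typing (replicate k W) body W"
      unfolding body_def
      by (rule typing_apps[OF _ tG]) (simp add: typing_closed_any[OF H(1)])
    then show "typing [] ((Abs ^^ k) body) (arrows k W W)"
      by (intro typing_Abs_pow) simp
    fix ns :: "nat list" assume len: "length ns = k"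
    have lcH: "lc 0 H" using H(1) by (rule typing_closed)
    have lcG: "\<And>j. j < m \<Longrightarrow> lc 0 (Gs j)" using Gs(1) by (rule typing_closed)
    have sv: "map (\<lambda>x. sub_all x (map church ns)) vars = map church ns"
      using len by (auto simp: vars_def sub_all_Var_church intro!: nth_equalityI)
    have "bs (apps ((Abs ^^ length (map church ns)) body) (map church ns))
           (sub_all body (map church ns))"
      by (rule multi_beta) simp
    also have "sub_all body (map church ns) = apps H (map (\<lambda>j. apps (Gs j) (map church ns)) [0..<m])"
      proof -
      have "map (\<lambda>j. sub_all (apps (Gs j) vars) (map church ns)) [0..<m] = map (\<lambda>j. apps (Gs j) (map church ns)) [0..<m]"
      proof (rule map_cong)
        fix j assume "j \<in> set [0..<m]"
        then have "lc 0 (Gs j)" using lcG by simp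
        then show "sub_all (apps (Gs j) vars) (map church ns) = apps (Gs j) (map church ns)"
          using sv by simp
      qed simp
      then show ?thesis unfolding body_def using lcH by (simp only: sub_all_apps sub_all_closed map_map comp_def)
    qed
    finally have "conv (apps ((Abs ^^ k) body) (map church ns)) (apps H (map (\<lambda>j. apps (Gs j) (map church ns)) [0..<m]))"
      using len by (auto intro: bs_conv)
    also have "conv \<dots> (apps H (map church (map (\<lambda>j. gs j ns) [0..<m])))"
      by (rule conv_apps_args) (auto intro: Gs(2) len)
    also have "conv \<dots> (church (h (map (\<lambda>j. gs j ns) [0..<m])))"
      by (rule H(2)) simp
    finally show "conv (apps ((Abs ^^ k) body) (map church ns)) (church (h (map (\<lambda>j. gs j ns) [0..<m])))" .
  qed
qed

lemma len2: "length ns = 2 \<Longrightarrow> \<exists>a b. ns = [a, b]"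
  by (cases ns; cases "tl ns"; auto simp: numeral_2_eq_2)
lemma len3: "length ns = 3 \<Longrightarrow> \<exists>a b c. ns = [a, b, c]"
  by (cases ns; cases "tl ns"; cases "tl (tl ns)"; auto simp: numeral_3_eq_3)

lemma church_body: "church n = Abs (Abs ((App (Var 1) ^^ n) (Var 0)))"
  by (simp add: church_def)

lemma rep_add: "rep (omega \<tau>) 2 (\<lambda>xs. xs ! 0 + xs ! 1)"
proof -
  define X where "X = App (App (Var 3) (Var 1)) (App (App (Var 2) (Var 1)) (Var 0))"
  have ty: "typing [] ((Abs ^^ 2) (Abs (Abs X))) (arrows 2 (omega \<tau>) (omega \<tau>))"
    unfolding numeral_2_eq_2
    by (rule typing_Abs_pow) (auto simp: X_def omega_def intro!: typing.intros)
  have cv: "conv (apps ((Abs ^^ 2) (Abs (Abs X))) [church a, church b]) (church (a + b))" for a b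
  proof -
    have "bs (apps ((Abs ^^ length [church a, church b]) (Abs (Abs X))) [church a, church b])
             (sub_all (Abs (Abs X)) [church a, church b])" by (rule multi_beta) simp
    moreover have "sub_all (Abs (Abs X)) [church a, church b] =
       Abs (Abs (App (App (church a) (Var 1)) (App (App (church b) (Var 1)) (Var 0))))"
      by (simp add: X_def)
    moreover have "bs (Abs (Abs (App (App (church a) (Var 1)) (App (App (church b) (Var 1)) (Var 0)))))
                      (church (a + b))"
    proof -
      have "bs (App (App (church a) (Var 1)) (App (App (church b) (Var 1)) (Var 0)))
               (App (App (church a) (Var 1)) ((App (Var 1) ^^ b) (Var 0)))"
        by (rule bs_AppR) (rule church_app)
      also have "bs \<dots> ((App (Var 1) ^^ a) ((App (Var 1) ^^ b) (Var 0)))" by (rule church_app)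
      finally show ?thesis by (simp add: church_body funpow_add bs_Abs)
    qed
    ultimately show ?thesis by (auto simp: numeral_2_eq_2 intro: bs_conv)
  qed
  show ?thesis unfolding rep_def using ty cv by (auto dest!: len2)
qed

lemma rep_mult: "rep (omega \<tau>) 2 (\<lambda>xs. xs ! 0 * xs ! 1)"
proof -
  define X where "X = Abs (App (Var 2) (App (Var 1) (Var 0)))"
  have ty: "typing [] ((Abs ^^ 2) X) (arrows 2 (omega \<tau>) (omega \<tau>))"
    unfolding numeral_2_eq_2
    by (rule typing_Abs_pow) (auto simp: X_def omega_def intro!: typing.intros)
  have cv: "conv (apps ((Abs ^^ 2) X) [church a, church b]) (church (a * b))" for a b
  proof -
    have "bs (apps ((Abs ^^ length [church a, church b]) X) [church a, church b])
             (sub_all X [church a, church b])" by (rule multi_beta) simp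
    moreover have "sub_all X [church a, church b] = Abs (App (church a) (App (church b) (Var 0)))"
      by (simp add: X_def)
    moreover have "bs (Abs (App (church a) (App (church b) (Var 0)))) (church (a * b))"
    proof -
      define U where "U = Abs ((App (Var 1) ^^ b) (Var 0))"
      have "bs (App (church b) (Var 0)) U"
        unfolding U_def church_body using bs_red[of "Abs ((App (Var 1) ^^ b) (Var 0))" "Var 0"] by simp
      then have "bs (App (church a) (App (church b) (Var 0))) (App (church a) U)" by (rule bs_AppR)
      also have "bs \<dots> (Abs ((App (lift U 0) ^^ a) (Var 0)))"
        unfolding church_body using bs_red[of "Abs ((App (Var 1) ^^ a) (Var 0))" U] by simp
      also have "lift U 0 = Abs ((App (lift (Var 1) 0) ^^ b) (Var 0))" by (simp add: U_def)
      also have "bs (Abs ((App (Abs ((App (lift (Var 1) 0) ^^ b) (Var 0))) ^^ a) (Var 0)))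
                    (Abs ((App (Var 1) ^^ (a * b)) (Var 0)))"
        by (rule bs_Abs) (rule iter_beta)
      finally show ?thesis by (simp add: church_body bs_Abs)
    qed
    ultimately show ?thesis by (auto simp: numeral_2_eq_2 intro: bs_conv)
  qed
  show ?thesis unfolding rep_def using ty cv by (auto dest!: len2)
qed

lemma rep_ifzero: "rep (omega \<tau>) 3 (\<lambda>xs. if xs ! 0 = 0 then xs ! 1 else xs ! 2)"
proof -
  define X where "X = Abs (Abs (App (App (Var 4) (Abs (App (App (Var 3) (Var 2)) (Var 1))))
                                 (App (App (Var 3) (Var 1)) (Var 0))))"
  have ty: "typing [] ((Abs ^^ 3) X) (arrows 3 (omega \<tau>) (omega \<tau>))"
    unfolding numeral_3_eq_3
    by (rule typing_Abs_pow) (auto simp: X_def omega_def intro!: typing.intros)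
  have cv: "conv (apps ((Abs ^^ 3) X) [church n, church m, church p]) (church (if n = 0 then m else p))" for n m p
  proof -
    define U where "U = Abs (App (App (church p) (Var 2)) (Var 1))"
    define V where "V = App (App (church m) (Var 1)) (Var 0)"
    have "bs (apps ((Abs ^^ length [church n, church m, church p]) X) [church n, church m, church p])
             (sub_all X [church n, church m, church p])" by (rule multi_beta) simp
    moreover have "sub_all X [church n, church m, church p] = Abs (Abs (App (App (church n) U) V))"
      by (simp add: X_def U_def V_def)
    moreover have "bs (Abs (Abs (App (App (church n) U) V))) (church (if n = 0 then m else p))"
    proof -
      have "bs (App (App (church n) U) V) ((App U ^^ n) V)" by (rule church_app)
      also have "bs \<dots> ((App (Var 1) ^^ (if n = 0 then m else p)) (Var 0))"
      proof (cases n)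
        case 0 then show ?thesis using church_app[of m "Var 1" "Var 0"] by (simp add: V_def)
      next
        case (Suc n')
        have "bs ((App U ^^ n) V) (App (App (church p) (Var 1)) (Var 0))"
          using Suc bs_red[of "App (App (church p) (Var 2)) (Var 1)"] by (simp add: U_def)
        also have "bs \<dots> ((App (Var 1) ^^ p) (Var 0))" by (rule church_app)
        finally show ?thesis using Suc by simp
      qed
      finally show ?thesis by (simp add: church_body bs_Abs)
    qed
    ultimately show ?thesis by (auto simp: numeral_3_eq_3 intro: bs_conv)
  qed
  show ?thesis unfolding rep_def
  proof (intro exI conjI allI impI)
    fix ns :: "nat list" assume "length ns = 3"
    then obtain n m p where "ns = [n, m, p]" using len3 by blast
    then show "conv (apps ((Abs ^^ 3) X) (map church ns)) (church (if ns ! 0 = 0 then ns ! 1 else ns ! 2))"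
      using cv[of n m p] by (cases "n = 0") auto
  qed (rule ty)
qed

lemma ExtPoly_rep: "ExtPoly k f \<Longrightarrow> rep (omega \<tau>) k f"
proof (induction rule: ExtPoly.induct)
  case (ep_zero k) then show ?case by (rule rep_const)
next
  case (ep_one k) then show ?case by (rule rep_const)
next
  case (ep_proj i k) then show ?case by (rule rep_proj)
next
  case ep_add then show ?case by (rule rep_add)
next
  case ep_mult then show ?case by (rule rep_mult)
next
  case ep_ifzero then show ?case by (rule rep_ifzero)
next
  case (ep_comp m h k gs) then show ?case by (intro rep_comp) auto
qed

definition Stup :: "nat \<Rightarrow> (nat \<Rightarrow> nat) \<Rightarrow> dB" where
  "Stup s V = Abs (apps (Var 0) (map (\<lambda>j. church (V j)) [0..<s]))"
definition Ys :: "nat \<Rightarrow> (nat \<Rightarrow> nat option) \<Rightarrow> dB list" where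
  "Ys s \<pi> = map (\<lambda>j. case \<pi> j of None \<Rightarrow> church 0 | Some i \<Rightarrow> Var (s - Suc i)) [0..<s]"
definition Fm :: "nat \<Rightarrow> (nat \<Rightarrow> nat option) \<Rightarrow> dB" where
  "Fm s \<pi> = Abs (Abs (App (Var 1) ((Abs ^^ s) (apps (Var s) (Ys s \<pi>)))))"
definition Pj :: "nat \<Rightarrow> nat \<Rightarrow> dB" where
  "Pj s j = (Abs ^^ s) (Var (s - Suc j))"
definition mstep :: "(nat \<Rightarrow> nat option) \<Rightarrow> (nat \<Rightarrow> nat) \<Rightarrow> nat \<Rightarrow> nat" where
  "mstep \<pi> V = (\<lambda>j. case \<pi> j of None \<Rightarrow> 0 | Some i \<Rightarrow> V i)"
definition wfm :: "nat \<Rightarrow> (nat \<Rightarrow> nat option) \<Rightarrow> bool" where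
  "wfm s \<pi> \<longleftrightarrow> (\<forall>j<s. \<forall>i. \<pi> j = Some i \<longrightarrow> i < s)"

lemma lc_Abs_pow[simp]: "lc k ((Abs ^^ n) t) = lc (k + n) t"
  by (induction n arbitrary: k) auto

lemma lc_church_k[simp]: "lc k (church n)"
  using lc_church lc_mono by blast
lemma subst_church[simp]: "subst (church n) u k = church n" by simp
lemma lift_church[simp]: "lift (church n) k = church n" by simp

lemma lc_Stup[simp]: "lc 0 (Stup s V)"
  by (auto simp: Stup_def)

lemma lc_Ys: "wfm s \<pi> \<Longrightarrow> \<forall>y\<in>set (Ys s \<pi>). lc s y"
  by (auto simp: Ys_def wfm_def split: option.splits intro: lc_mono[of 0])

lemma lc_P: "wfm s \<pi> \<Longrightarrow> lc 1 ((Abs ^^ s) (apps (Var s) (Ys s \<pi>)))"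
  using lc_Ys[of s \<pi>] by (auto intro: lc_mono)

lemma lc_Fm[simp]: "wfm s \<pi> \<Longrightarrow> lc 0 (Fm s \<pi>)"
proof -
  assume "wfm s \<pi>"
  then have "lc 2 ((Abs ^^ s) (apps (Var s) (Ys s \<pi>)))" using lc_P[of s \<pi>] lc_mono by fastforce
  then show ?thesis by (simp add: Fm_def numeral_2_eq_2)
qed

lemma lc_Pj[simp]: "j < s \<Longrightarrow> lc 0 (Pj s j)"
  by (simp add: Pj_def)

lemma step_beta:
  assumes wf: "wfm s \<pi>"
  shows "bs (App (Fm s \<pi>) (Stup s V)) (Stup s (mstep \<pi> V))"
proof -
  define P where "P = (Abs ^^ s) (apps (Var s) (Ys s \<pi>))"
  define cs where "cs = map (\<lambda>j. church (V j)) [0..<s]"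
  have lcP: "lc 1 P" using lc_P[OF wf] by (simp add: P_def)
  have sP: "subst P u 1 = P" for u by (rule subst_lc[OF lcP]) simp
  have "bs (App (Fm s \<pi>) (Stup s V)) (subst (Abs (App (Var 1) P)) (Stup s V) 0)"
    unfolding Fm_def P_def by (rule bs_red)
  also have "subst (Abs (App (Var 1) P)) (Stup s V) 0 = Abs (App (Stup s V) P)"
    using sP by simp
  also have "bs (Abs (App (Stup s V) P)) (Abs (apps P cs))"
  proof (rule bs_Abs)
    show "bs (App (Stup s V) P) (apps P cs)"
      unfolding Stup_def using bs_red[of "apps (Var 0) cs" P] by (simp add: cs_def comp_def)
  qed
  also have "bs (Abs (apps P cs)) (Abs (sub_all (apps (Var s) (Ys s \<pi>)) cs))"
  proof (rule bs_Abs)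
    have "bs (apps ((Abs ^^ length cs) (apps (Var s) (Ys s \<pi>))) cs) (sub_all (apps (Var s) (Ys s \<pi>)) cs)"
      by (rule multi_beta) (simp add: cs_def)
    moreover have "length cs = s" by (simp add: cs_def)
    ultimately show "bs (apps P cs) (sub_all (apps (Var s) (Ys s \<pi>)) cs)" by (simp add: P_def)
  qed
  also have "sub_all (apps (Var s) (Ys s \<pi>)) cs = apps (Var 0) (map (\<lambda>j. church (mstep \<pi> V j)) [0..<s])"
  proof -
    have cl: "\<forall>c\<in>set cs. lc 0 c" by (simp add: cs_def)
    have "sub_all (Var s) cs = Var 0" using sub_all_Var[OF cl, of s] by (simp add: cs_def)
    moreover have "map (\<lambda>y. sub_all y cs) (Ys s \<pi>) = map (\<lambda>j. church (mstep \<pi> V j)) [0..<s]"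
    proof (rule nth_equalityI)
      fix j assume "j < length (map (\<lambda>y. sub_all y cs) (Ys s \<pi>))"
      then have j: "j < s" by (simp add: Ys_def)
      show "map (\<lambda>y. sub_all y cs) (Ys s \<pi>) ! j = map (\<lambda>j. church (mstep \<pi> V j)) [0..<s] ! j"
      proof (cases "\<pi> j")
        case None then show ?thesis using j by (simp add: Ys_def mstep_def)
      next
        case (Some i)
        then have i: "i < s" using wf j by (auto simp: wfm_def)
        have "sub_all (Var (s - Suc i)) cs = cs ! i"
          using sub_all_Var[OF cl, of "s - Suc i"] i by (simp add: cs_def)
        then show ?thesis using j i Some by (simp add: Ys_def mstep_def cs_def)
      qed
    qed (simp add: Ys_def)
    ultimately show ?thesis by simp
  qed
  finally show ?thesis by (simp add: Stup_def)
qed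

lemma funpow_Suc_app: "(f ^^ Suc n) x = f ((f ^^ n) x)"
  by simp

lemma iter_machine:
  assumes wf: "wfm s \<pi>"
  shows "bs ((App (Fm s \<pi>) ^^ m) (Stup s V)) (Stup s ((mstep \<pi> ^^ m) V))"
proof (induction m)
  case 0 then show ?case by (simp only: funpow.simps(1) id_apply)
next
  case (Suc m)
  have h1: "bs (App (Fm s \<pi>) ((App (Fm s \<pi>) ^^ m) (Stup s V))) (App (Fm s \<pi>) (Stup s ((mstep \<pi> ^^ m) V)))"
    by (rule bs_AppR) (rule Suc.IH)
  have h2: "bs (App (Fm s \<pi>) (Stup s ((mstep \<pi> ^^ m) V))) (Stup s (mstep \<pi> ((mstep \<pi> ^^ m) V)))"
    by (rule step_beta[OF wf])
  show ?case unfolding funpow_Suc_app using h1 h2 by (rule rtranclp_trans)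
qed

lemma proj_beta:
  assumes j: "j < s"
  shows "bs (App (Stup s V) (Pj s j)) (church (V j))"
proof -
  define cs where "cs = map (\<lambda>j. church (V j)) [0..<s]"
  have "bs (App (Stup s V) (Pj s j)) (apps (Pj s j) cs)"
    unfolding Stup_def using bs_red[of "apps (Var 0) cs" "Pj s j"] j by (simp add: cs_def comp_def)
  also have "bs \<dots> (sub_all (Var (s - Suc j)) cs)"
  proof -
    have "bs (apps ((Abs ^^ length cs) (Var (s - Suc j))) cs) (sub_all (Var (s - Suc j)) cs)"
      by (rule multi_beta) (simp add: cs_def)
    moreover have "length cs = s" by (simp add: cs_def)
    ultimately show ?thesis by (simp add: Pj_def)
  qed
  also have "sub_all (Var (s - Suc j)) cs = church (V j)"
    using sub_all_Var[of cs "s - Suc j"] j by (simp add: cs_def)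
  finally show ?thesis .
qed

lemma read_beta:
  assumes wf: "wfm s \<pi>" and j: "j < s"
  shows "bs (App (apps (church m) [Fm s \<pi>, Stup s V]) (Pj s j)) (church ((mstep \<pi> ^^ m) V j))"
proof -
  have "bs (App (apps (church m) [Fm s \<pi>, Stup s V]) (Pj s j)) (App ((App (Fm s \<pi>) ^^ m) (Stup s V)) (Pj s j))"
    using bs_AppL[OF church_app[of m "Fm s \<pi>" "Stup s V"], of "Pj s j"] by simp
  also have "bs \<dots> (App (Stup s ((mstep \<pi> ^^ m) V)) (Pj s j))"
    by (rule bs_AppL) (rule iter_machine[OF wf])
  also have "bs \<dots> (church ((mstep \<pi> ^^ m) V j))" by (rule proj_beta[OF j])
  finally show ?thesis .
qed

lemma typing_Stup: "typing \<Gamma> (Stup s V) (tuple_ty s)"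
proof -
  have "typing (arrows s alpha alpha # \<Gamma>) (apps (Var 0) (map (\<lambda>j. church (V j)) [0..<s])) alpha"
  proof (rule typing_apps)
    show "typing (arrows s alpha alpha # \<Gamma>) (Var 0) (arrows (length (map (\<lambda>j. church (V j)) [0..<s])) alpha alpha)"
      by (rule typ_var) auto
    show "\<forall>a\<in>set (map (\<lambda>j. church (V j)) [0..<s]). typing (arrows s alpha alpha # \<Gamma>) a alpha"
      by (auto simp: alpha_def typing_church)
  qed
  then show ?thesis unfolding Stup_def tuple_ty_def by (rule typ_abs)
qed

lemma typing_Pj: "j < s \<Longrightarrow> typing \<Gamma> (Pj s j) (arrows s alpha alpha)"
  unfolding Pj_def by (intro typing_Abs_pow typ_var) (auto simp: nth_append)

lemma typing_Fm: "wfm s \<pi> \<Longrightarrow> typing \<Gamma> (Fm s \<pi>) (Fun (tuple_ty s) (tuple_ty s))"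
proof -
  assume wf: "wfm s \<pi>"
  let ?A = "arrows s alpha alpha"
  let ?G = "replicate s alpha @ ?A # tuple_ty s # \<Gamma>"
  have "typing ?G (apps (Var s) (Ys s \<pi>)) alpha"
  proof (rule typing_apps)
    show "typing ?G (Var s) (arrows (length (Ys s \<pi>)) alpha alpha)"
      by (rule typ_var) (auto simp: nth_append Ys_def)
    show "\<forall>a\<in>set (Ys s \<pi>). typing ?G a alpha"
    proof
      fix a assume "a \<in> set (Ys s \<pi>)"
      then obtain j where j: "j < s" "a = (case \<pi> j of None \<Rightarrow> church 0 | Some i \<Rightarrow> Var (s - Suc i))"
        by (auto simp: Ys_def)
      show "typing ?G a alpha"
      proof (cases "\<pi> j")
        case None then show ?thesis using j by (simp add: alpha_def typing_church)
      next
        case (Some i)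
        then have "i < s" using wf j by (auto simp: wfm_def)
        then show ?thesis using j Some by (auto intro!: typ_var simp: nth_append)
      qed
    qed
  qed
  then have "typing (?A # tuple_ty s # \<Gamma>) ((Abs ^^ s) (apps (Var s) (Ys s \<pi>))) ?A"
    by (rule typing_Abs_pow)
  moreover have "typing (?A # tuple_ty s # \<Gamma>) (Var 1) (Fun ?A alpha)"
    by (rule typ_var) (auto simp: tuple_ty_def)
  ultimately have "typing (?A # tuple_ty s # \<Gamma>) (App (Var 1) ((Abs ^^ s) (apps (Var s) (Ys s \<pi>)))) alpha"
    by (rule typ_app[rotated])
  then show ?thesis unfolding Fm_def tuple_ty_def by (intro typ_abs)
qed

definition IFZQ :: dB where
  "IFZQ = Abs (Abs (Abs (Abs (Abs
     (App (App (Var 7) (Abs (apps (Var 6) [Var 5, Var 4, Var 3, Var 2, Var 1])))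
          (apps (Var 6) [Var 4, Var 3, Var 2, Var 1, Var 0]))))))"

definition IFZW :: dB where "IFZW = Abs (Abs (Abs IFZQ))"

lemma lc_IFZW[simp]: "lc 0 IFZW"
  by (simp add: IFZW_def IFZQ_def)

lemma typing_IFZW:
  "typing \<Gamma> IFZW (Fun alpha (Fun (omega (Fun Ap alpha)) (Fun (omega (Fun Ap alpha)) (omega (Fun Ap alpha)))))"
  unfolding IFZW_def IFZQ_def omega_def alpha_def
  by (auto intro!: typing.intros)

lemma eta_step: "\<not> free X 0 \<Longrightarrow> conv (Abs (App X (Var 0))) (subst X (Var 0) 0)"
  by (rule eta_conv) (rule eta_red)

lemma eta5: "conv (Abs (Abs (Abs (Abs (Abs (apps (church p) [Var 4, Var 3, Var 2, Var 1, Var 0]))))))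
                  (church p)"
proof -
  have b1: "bs (apps (church p) [Var 4, Var 3, Var 2, Var 1, Var 0])
               (App (App (App ((App (Var 4) ^^ p) (Var 3)) (Var 2)) (Var 1)) (Var 0))"
    using bs_AppL[OF bs_AppL[OF bs_AppL[OF church_app[of p "Var 4" "Var 3"]]]] by simp
  have e1: "conv (Abs (App (App (App ((App (Var 4) ^^ p) (Var 3)) (Var 2)) (Var 1)) (Var 0)))
                 (App (App ((App (Var 3) ^^ p) (Var 2)) (Var 1)) (Var 0))"
    using eta_step[of "App (App ((App (Var 4) ^^ p) (Var 3)) (Var 2)) (Var 1)"] by simp
  have e2: "conv (Abs (App (App ((App (Var 3) ^^ p) (Var 2)) (Var 1)) (Var 0)))
                 (App ((App (Var 2) ^^ p) (Var 1)) (Var 0))"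
    using eta_step[of "App ((App (Var 3) ^^ p) (Var 2)) (Var 1)"] by simp
  have e3: "conv (Abs (App ((App (Var 2) ^^ p) (Var 1)) (Var 0)))
                 ((App (Var 1) ^^ p) (Var 0))"
    using eta_step[of "(App (Var 2) ^^ p) (Var 1)"] by simp
  have "conv (Abs (Abs (Abs (Abs (Abs (apps (church p) [Var 4, Var 3, Var 2, Var 1, Var 0]))))))
             (Abs (Abs (Abs (Abs (Abs (App (App (App ((App (Var 4) ^^ p) (Var 3)) (Var 2)) (Var 1)) (Var 0)))))))"
    by (intro conv_Abs bs_conv b1)
  also have "conv \<dots> (Abs (Abs (Abs (Abs (App (App ((App (Var 3) ^^ p) (Var 2)) (Var 1)) (Var 0))))))"
    by (intro conv_Abs e1)
  also have "conv \<dots> (Abs (Abs (Abs (App ((App (Var 2) ^^ p) (Var 1)) (Var 0)))))"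
    by (intro conv_Abs e2)
  also have "conv \<dots> (Abs (Abs ((App (Var 1) ^^ p) (Var 0))))"
    by (intro conv_Abs e3)
  finally show ?thesis by (simp add: church_body)
qed

lemma IFZW_conv: "conv (apps IFZW [church b, church p, church r]) (church (if b = 0 then p else r))"
proof -
  define U where "U = Abs (apps (church r) [Var 5, Var 4, Var 3, Var 2, Var 1])"
  define V where "V = apps (church p) [Var 4, Var 3, Var 2, Var 1, Var 0]"
  have "bs (apps ((Abs ^^ length [church b, church p, church r]) IFZQ) [church b, church p, church r])
           (sub_all IFZQ [church b, church p, church r])" by (rule multi_beta) simp
  moreover have "(Abs ^^ length [church b, church p, church r]) IFZQ = IFZW"
    by (simp add: IFZW_def numeral_3_eq_3)
  moreover have "sub_all IFZQ [church b, church p, church r] =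
      Abs (Abs (Abs (Abs (Abs (App (App (church b) U) V)))))"
    by (simp add: IFZQ_def U_def V_def)
  ultimately have 1: "bs (apps IFZW [church b, church p, church r]) (Abs (Abs (Abs (Abs (Abs (App (App (church b) U) V))))))"
    by simp
  have 2: "bs (App (App (church b) U) V) (apps (church (if b = 0 then p else r)) [Var 4, Var 3, Var 2, Var 1, Var 0])"
  proof (cases b)
    case 0 then show ?thesis using church_app[of b U V] by (simp add: V_def)
  next
    case (Suc b')
    have "bs (App (App (church b) U) V) ((App U ^^ b) V)" by (rule church_app)
    also have "bs \<dots> (apps (church r) [Var 4, Var 3, Var 2, Var 1, Var 0])"
      using Suc bs_red[of "apps (church r) [Var 5, Var 4, Var 3, Var 2, Var 1]"] by (simp add: U_def)
    finally show ?thesis using Suc by simp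
  qed
  have "conv (apps IFZW [church b, church p, church r])
     (Abs (Abs (Abs (Abs (Abs (apps (church (if b = 0 then p else r)) [Var 4, Var 3, Var 2, Var 1, Var 0]))))))"
    using 1 2 by (meson bs_Abs bs_conv rtranclp_trans)
  also have "conv \<dots> (church (if b = 0 then p else r))" by (rule eta5)
  finally show ?thesis .
qed

definition Hm :: "nat \<Rightarrow> (nat \<Rightarrow> nat option) \<Rightarrow> (nat \<Rightarrow> nat) \<Rightarrow> nat \<Rightarrow> dB" where
  "Hm s \<pi> V0 j = (Abs ^^ 3) (apps IFZW [App (apps (Var 2) [Fm s \<pi>, Stup s V0]) (Pj s j), Var 1, Var 0])"

lemma rep_mach:
  assumes wf: "wfm s \<pi>" and j: "j < s"
  shows "rep (omega (tuple_ty s)) 3 (\<lambda>xs. if (mstep \<pi> ^^ (xs ! 0)) V0 j = 0 then xs ! 1 else xs ! 2)"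
proof -
  let ?W = "omega (tuple_ty s)"
  let ?B = "App (apps (Var 2) [Fm s \<pi>, Stup s V0]) (Pj s j)"
  have tB: "typing [?W, ?W, ?W] ?B alpha"
  proof (rule typ_app[where T="arrows s alpha alpha"])
    show "typing [?W, ?W, ?W] (Pj s j) (arrows s alpha alpha)" by (rule typing_Pj[OF j])
    have "typing [?W, ?W, ?W] (App (Var 2) (Fm s \<pi>)) (Fun (tuple_ty s) (tuple_ty s))"
      by (rule typ_app[OF _ typing_Fm[OF wf]]) (rule typ_var, auto simp: omega_def)
    then show "typing [?W, ?W, ?W] (apps (Var 2) [Fm s \<pi>, Stup s V0]) (Fun (arrows s alpha alpha) alpha)"
      using typing_Stup by (auto simp: tuple_ty_def intro: typ_app)
  qed
  have tI: "typing [?W, ?W, ?W] IFZW (Fun alpha (Fun ?W (Fun ?W ?W)))"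
    using typing_IFZW[of _ "arrows s alpha alpha"] by (simp add: tuple_ty_def)
  have tBody: "typing [?W, ?W, ?W] (apps IFZW [?B, Var 1, Var 0]) ?W"
  proof -
    have v1: "typing [?W, ?W, ?W] (Var 1) ?W" and v0: "typing [?W, ?W, ?W] (Var 0) ?W"
      by (auto intro!: typ_var)
    show ?thesis using typ_app[OF typ_app[OF typ_app[OF tI tB] v1] v0] by simp
  qed
  have ty: "typing [] (Hm s \<pi> V0 j) (arrows 3 ?W ?W)"
    unfolding Hm_def numeral_3_eq_3
    by (rule typing_Abs_pow) (use tBody in \<open>simp add: numeral_3_eq_3\<close>)
  have cv: "conv (apps (Hm s \<pi> V0 j) [church m, church a, church c])
                 (church (if (mstep \<pi> ^^ m) V0 j = 0 then a else c))" for m a c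
  proof -
    have "bs (apps ((Abs ^^ length [church m, church a, church c]) (apps IFZW [?B, Var 1, Var 0])) [church m, church a, church c])
             (sub_all (apps IFZW [?B, Var 1, Var 0]) [church m, church a, church c])"
      by (rule multi_beta) simp
    moreover have "sub_all (apps IFZW [?B, Var 1, Var 0]) [church m, church a, church c]
       = apps IFZW [App (apps (church m) [Fm s \<pi>, Stup s V0]) (Pj s j), church a, church c]"
      using wf j by (simp add: sub_all_Var)
    ultimately have "conv (apps (Hm s \<pi> V0 j) [church m, church a, church c])
                  (apps IFZW [App (apps (church m) [Fm s \<pi>, Stup s V0]) (Pj s j), church a, church c])"
      by (simp add: Hm_def numeral_3_eq_3 bs_conv)
    also have "conv \<dots> (apps IFZW [church ((mstep \<pi> ^^ m) V0 j), church a, church c])"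
      using read_beta[OF wf j, of m V0] by (simp add: conv_AppL conv_AppR bs_conv)
    also have "conv \<dots> (church (if (mstep \<pi> ^^ m) V0 j = 0 then a else c))" by (rule IFZW_conv)
    finally show ?thesis .
  qed
  show ?thesis unfolding rep_def
  proof (intro exI conjI allI impI)
    fix ns :: "nat list" assume "length ns = 3"
    then obtain n a c where "ns = [n, a, c]" using len3 by blast
    then show "conv (apps (Hm s \<pi> V0 j) (map church ns))
       (church (if (mstep \<pi> ^^ (ns ! 0)) V0 j = 0 then ns ! 1 else ns ! 2))"
      using cv[of n a c] by (cases "(mstep \<pi> ^^ n) V0 j = 0") auto
  qed (rule ty)
qed

lemma rep_comp3:
  assumes "rep W 3 h" "rep W k g0" "rep W k g1" "rep W k g2"
  shows "rep W k (\<lambda>xs. h [g0 xs, g1 xs, g2 xs])"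
proof -
  have "rep W k (\<lambda>xs. h (map (\<lambda>j. ([g0, g1, g2] ! j) xs) [0..<3]))"
    using assms by (intro rep_comp) (auto simp: less_Suc_eq numeral_3_eq_3)
  then show ?thesis by (rule rep_ext) (simp add: numeral_3_eq_3 upt_rec)
qed

definition piS :: "nat \<Rightarrow> nat option" where
  "piS j = (if j = 0 then None else Some (j - 1))"
definition V1 :: "nat \<Rightarrow> nat" where
  "V1 j = (if j = 0 then 1 else 0)"

lemma wfm_piS: "wfm s piS"
  by (auto simp: wfm_def piS_def)

lemma piS_iter: "(mstep piS ^^ m) V1 j = (if j = m then 1 else 0)"
proof (induction m arbitrary: j)
  case 0 then show ?case by (simp add: V1_def)
next
  case (Suc m) then show ?case by (auto simp: mstep_def piS_def)
qed

lemma rep_f2: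
  assumes s: "l + 1 \<le> s"
  shows "rep (omega (tuple_ty s)) 3 (\<lambda>xs. if xs ! 0 \<le> l then xs ! 1 else xs ! 2)"
proof -
  let ?W = "omega (tuple_ty s)"
  define U where "U j xs = (if j \<le> xs ! 0 \<and> xs ! 0 \<le> l then xs ! 1 else (xs ! 2 :: nat))" for j xs
  have "rep ?W 3 (U j)" if "j \<le> l + 1" for j
    using that
  proof (induction j rule: inc_induct)
    case base
    have "rep ?W 3 (\<lambda>xs. xs ! 2)" by (rule rep_proj) simp
    then show ?case by (rule rep_ext) (auto simp: U_def)
  next
    case (step n)
    have h: "rep ?W 3 (\<lambda>xs. if (mstep piS ^^ (xs ! 0)) V1 n = 0 then xs ! 1 else xs ! 2)"
      by (rule rep_mach[OF wfm_piS]) (use step s in simp)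
    have "rep ?W 3 (\<lambda>xs. (\<lambda>ys. if (mstep piS ^^ (ys ! 0)) V1 n = 0 then ys ! 1 else ys ! 2)
                         [xs ! 0, U (Suc n) xs, xs ! 1])"
      by (rule rep_comp3[OF h]) (auto intro: rep_proj step.IH)
    then show ?case by (rule rep_ext) (use step in \<open>auto simp: U_def piS_iter\<close>)
  qed
  then have "rep ?W 3 (U 0)" by simp
  then show ?thesis by (rule rep_ext) (simp add: U_def)
qed

definition piR :: "nat \<Rightarrow> nat \<Rightarrow> nat option" where
  "piR l j = (if j < l then Some ((j + l - 1) mod l) else None)"

lemma wfm_piR: "0 < l \<Longrightarrow> l \<le> s \<Longrightarrow> wfm s (piR l)"
  by (auto simp: wfm_def piR_def intro: less_le_trans[OF mod_less_divisor])

lemma rot_arith: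
  assumes "0 < l" "j < l"
  shows "((j + l - 1) mod l = m mod l) \<longleftrightarrow> (j = Suc m mod l)"
proof (cases j)
  case 0
  have "(l - 1) mod l = l - 1" using assms by simp
  then show ?thesis using 0 assms mod_less_divisor[of l m] by (auto simp: mod_Suc)
next
  case (Suc j')
  have "(j + l - 1) mod l = j'" using assms Suc by simp
  then show ?thesis using Suc assms by (auto simp: mod_Suc)
qed

lemma piR_iter:
  assumes "0 < l"
  shows "(mstep (piR l) ^^ m) V1 j = (if j < l \<and> j = m mod l then 1 else 0)"
proof (induction m arbitrary: j)
  case 0 then show ?case using assms by (auto simp: V1_def)
next
  case (Suc m)
  show ?case
  proof (cases "j < l")
    case True
    have "(mstep (piR l) ^^ Suc m) V1 j = (mstep (piR l) ^^ m) V1 ((j + l - 1) mod l)"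
      using True by (simp add: mstep_def piR_def)
    also have "\<dots> = (if (j + l - 1) mod l = m mod l then 1 else 0)"
      using Suc.IH assms by simp
    finally show ?thesis using rot_arith[OF assms True, of m] True by simp
  next
    case False then show ?thesis by (simp add: mstep_def piR_def)
  qed
qed

lemma rep_f1:
  assumes l: "2 \<le> l" and s: "l \<le> s"
  shows "rep (omega (tuple_ty s)) (Suc l) (\<lambda>xs. xs ! Suc (xs ! 0 mod l))"
proof -
  let ?W = "omega (tuple_ty s)"
  define T where "T j xs = (if j \<le> xs ! 0 mod l then xs ! Suc (xs ! 0 mod l) else (xs ! l :: nat))" for j xs
  have l0: "0 < l" using l by simp
  have "rep ?W (Suc l) (T j)" if "j \<le> l - 1" for j
    using that
  proof (induction j rule: inc_induct)
    case base
    have "rep ?W (Suc l) (\<lambda>xs. xs ! l)" by (rule rep_proj) simp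
    then show ?case
    proof (rule rep_ext, intro allI impI)
      fix xs :: "nat list"
      have "xs ! 0 mod l < l" using l0 by simp
      show "xs ! l = T (l - 1) xs"
      proof (cases "l - 1 \<le> xs ! 0 mod l")
        case True
        then have "xs ! 0 mod l = l - 1" using \<open>xs ! 0 mod l < l\<close> by linarith
        then have "Suc (xs ! 0 mod l) = l" using l0 by simp
        then show ?thesis using True by (simp add: T_def)
      qed (simp add: T_def)
    qed
  next
    case (step n)
    have h: "rep ?W 3 (\<lambda>xs. if (mstep (piR l) ^^ (xs ! 0)) V1 n = 0 then xs ! 1 else xs ! 2)"
      by (rule rep_mach[OF wfm_piR[OF l0 s]]) (use step s in simp)
    have "rep ?W (Suc l) (\<lambda>xs. (\<lambda>ys. if (mstep (piR l) ^^ (ys ! 0)) V1 n = 0 then ys ! 1 else ys ! 2)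
                         [xs ! 0, T (Suc n) xs, xs ! Suc n])"
      by (rule rep_comp3[OF h]) (use step in \<open>auto intro: rep_proj step.IH\<close>)
    then show ?case
      by (rule rep_ext) (use step in \<open>auto simp: T_def piR_iter[OF l0]\<close>)
  qed
  then have "rep ?W (Suc l) (T 0)" by simp
  then show ?thesis by (rule rep_ext) (simp add: T_def)
qed

lemma G_rep: "G k f \<Longrightarrow> \<exists>L. \<forall>s\<ge>L. rep (omega (tuple_ty s)) k f"
proof (induction rule: G.induct)
  case (g_extpoly k f) then show ?case using ExtPoly_rep by blast
next
  case (g_f1 l) then show ?case using rep_f1 by blast
next
  case (g_f2 l) then show ?case using rep_f2 by (intro exI[of _ "l + 1"]) blast
next
  case (g_comp m h k gs)
  obtain Lh where Lh: "\<forall>s\<ge>Lh. rep (omega (tuple_ty s)) m h" using g_comp.IH(1) by blast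
  have "\<forall>j. \<exists>L. j < m \<longrightarrow> (\<forall>s\<ge>L. rep (omega (tuple_ty s)) k (gs j))"
    using g_comp.IH(2) by blast
  from choice[OF this] obtain Lg where Lg: "\<forall>j. j < m \<longrightarrow> (\<forall>s\<ge>Lg j. rep (omega (tuple_ty s)) k (gs j))"
    by blast
  define L where "L = Lh + (\<Sum>j<m. Lg j)"
  have "rep (omega (tuple_ty s)) k (\<lambda>xs. h (map (\<lambda>j. gs j xs) [0..<m]))" if "s \<ge> L" for s
  proof (rule rep_comp)
    show "rep (omega (tuple_ty s)) m h" using Lh that by (simp add: L_def)
    show "\<forall>j<m. rep (omega (tuple_ty s)) k (gs j)"
    proof (intro allI impI)
      fix j assume j: "j < m"
      have "Lg j \<le> (\<Sum>j<m. Lg j)" using j by (intro member_le_sum) auto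
      then show "rep (omega (tuple_ty s)) k (gs j)" using Lg j that by (simp add: L_def)
    qed
  qed
  then show ?case by blast
qed

theorem theorem1:
  fixes k :: nat and f :: "nat list \<Rightarrow> nat"
  assumes "in_G k f"
  shows "finite {s::nat. 0 < s \<and>
           \<not> (\<exists>E. (\<forall>ns. length ns = k \<longrightarrow>
                      beta_eta_conv (apps E (map church ns)) (church (f ns)))
                 \<and> typing [] E (arrows k (omega (tuple_ty s)) (omega (tuple_ty s))))}"
proof -
  obtain g where g: "G k g" "\<forall>xs. length xs = k \<longrightarrow> f xs = g xs"
    using assms unfolding in_G_def by blast
  obtain L where L: "\<forall>s\<ge>L. rep (omega (tuple_ty s)) k g" using G_rep[OF g(1)] by blast
  have "{s::nat. 0 < s \<and>
           \<not> (\<exists>E. (\<forall>ns. length ns = k \<longrightarrow>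
                      beta_eta_conv (apps E (map church ns)) (church (f ns)))
                 \<and> typing [] E (arrows k (omega (tuple_ty s)) (omega (tuple_ty s))))} \<subseteq> {..<L}"
  proof
    fix s assume s: "s \<in> {s::nat. 0 < s \<and>
           \<not> (\<exists>E. (\<forall>ns. length ns = k \<longrightarrow>
                      beta_eta_conv (apps E (map church ns)) (church (f ns)))
                 \<and> typing [] E (arrows k (omega (tuple_ty s)) (omega (tuple_ty s))))}"
    show "s \<in> {..<L}"
    proof (rule ccontr)
      assume "s \<notin> {..<L}"
      then have "rep (omega (tuple_ty s)) k g" using L by auto
      then have "rep (omega (tuple_ty s)) k f" by (rule rep_ext) (use g(2) in auto)
      then show False using s unfolding rep_def by blast
    qed
  qed
  then show ?thesis by (rule finite_subset) simp
qed

end
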